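(* Let $\varepsilon>0$, $\delta\in(0,1)$, $\Delta>0$, and let $v$ be a real-valued function on datasets with sensitivity $\Delta$, i.e. $|v(D)-v(D')|\le\Delta$ for all neighboring datasets $D,D'$. Let $h:=\delta/(1+e^{\varepsilon})$ and let $q_h$ denote the absolute value of the $h$-quantile of the Laplace distribution $\mathrm{Lap}(\Delta/\varepsilon)$. Set $\tau:=q_h$. Consider the PositiveLaplaceMechanism which, on dataset $D$, samples $\eta\sim\mathrm{Lap}(\Delta/\varepsilon)$, sets $\tilde v:=v(D)+\tau+\eta$, and outputs $\max(v(D),\tilde v)$. Then this mechanism is $(\varepsilon,\delta)$-differentially private.
   Context: $\mathrm{Lap}(b)$ is the Laplace distribution with mean $0$ and scale $b$, with density $\frac{1}{2b}e^{-|x|/b}$. The $\phi$-quantile of a distribution is the value $x$ with $\Pr[X\le x]=\phi$. Two datasets are neighboring if they differ by replacing the contribution of one individual. A randomized algorithm $M$ is $(\varepsilon,\delta)$-differentially private if for every pair of neighboring datasets $D,D'$ and every measurable set $S$, $\Pr[M(D)\in S]\le e^{\varepsilon}\Pr[M(D')\in S]+\delta$ and symmetrically with $D,D'$ swapped. *)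

theory Defs
  imports "HOL-Probability.Probability"
begin

definition laplace :: "real \<Rightarrow> real measure" where
  "laplace b = density lborel (\<lambda>x. ennreal (1 / (2 * b) * exp (- \<bar>x\<bar> / b)))"

definition quantile :: "real measure \<Rightarrow> real \<Rightarrow> real" where
  "quantile M phi = (THE x. measure M {..x} = phi)"

definition neighboring :: "'a list \<Rightarrow> 'a list \<Rightarrow> bool" where
  "neighboring D D' \<longleftrightarrow> length D = length D' \<and>
     (\<exists>i<length D. \<forall>j<length D. j \<noteq> i \<longrightarrow> D ! j = D' ! j)"

definition sensitivity_bounded :: "('a list \<Rightarrow> real) \<Rightarrow> real \<Rightarrow> bool" where
  "sensitivity_bounded v \<Delta> \<longleftrightarrow> (\<forall>D D'. neighboring D D' \<longrightarrow> \<bar>v D - v D'\<bar> \<le> \<Delta>)"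

definition differentially_private :: "('a list \<Rightarrow> 'b measure) \<Rightarrow> real \<Rightarrow> real \<Rightarrow> bool" where
  "differentially_private M \<epsilon> \<delta> \<longleftrightarrow>
     (\<forall>D D'. neighboring D D' \<longrightarrow>
        (\<forall>S \<in> sets (M D). S \<in> sets (M D') \<longrightarrow>
           measure (M D) S \<le> exp \<epsilon> * measure (M D') S + \<delta> \<and>
           measure (M D') S \<le> exp \<epsilon> * measure (M D) S + \<delta>))"

definition positive_laplace_mechanism ::
  "('a list \<Rightarrow> real) \<Rightarrow> real \<Rightarrow> real \<Rightarrow> real \<Rightarrow> 'a list \<Rightarrow> real measure" where
  "positive_laplace_mechanism v \<Delta> \<epsilon> \<tau> D =
     distr (laplace (\<Delta> / \<epsilon>)) borel (\<lambda>\<eta>. max (v D) (v D + \<tau> + \<eta>))"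

end

theory Submission
  imports Defs
begin

lemma upper_tail:
  assumes b: "b > 0" and a: "a \<ge> 0"
  shows "emeasure (laplace b) {a..} = ennreal (exp (-a/b) / 2)"
proof -
  have "emeasure (laplace b) {a..} = (\<integral>\<^sup>+x. ennreal (1 / (2 * b) * exp (- \<bar>x\<bar> / b)) * indicator {a..} x \<partial>lborel)"
    unfolding laplace_def by (subst emeasure_density) auto
  also have "\<dots> = (\<integral>\<^sup>+x. ennreal (exp (- x / b) / (2*b)) * indicator {a..} x \<partial>lborel)"
    using a by (intro nn_integral_cong) (auto split: split_indicator)
  also have "\<dots> = ennreal (0 - (- exp (-a/b) / 2))"
  proof (rule nn_integral_FTC_atLeast)
    show "(\<lambda>x. exp (- x / b) / (2 * b)) \<in> borel_measurable borel" by measurable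
    fix x show "((\<lambda>x. - exp (-x/b) / 2) has_real_derivative exp (- x / b) / (2 * b)) (at x)"
      using b by (auto intro!: derivative_eq_intros simp: field_simps)
    show "0 \<le> exp (- x / b) / (2 * b)" using b by simp
  next
    show "((\<lambda>x. - exp (-x/b) / 2) \<longlongrightarrow> 0) at_top" using b by real_asymp
  qed
  finally show ?thesis by simp
qed

lemma lower_tail:
  assumes b: "b > 0" and a: "a \<le> 0"
  shows "emeasure (laplace b) {..a} = ennreal (exp (a/b) / 2)"
proof -
  have "emeasure (laplace b) {..a} = (\<integral>\<^sup>+x. ennreal (1 / (2 * b) * exp (- \<bar>x\<bar> / b)) * indicator {..a} x \<partial>lborel)"
    unfolding laplace_def by (subst emeasure_density) auto
  also have "\<dots> = ennreal \<bar>-1\<bar> * (\<integral>\<^sup>+x. ennreal (1 / (2 * b) * exp (- \<bar>0 + -1 * x\<bar> / b)) * indicator {..a} (0 + -1 * x) \<partial>lborel)"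
    by (rule nn_integral_real_affine) auto
  also have "\<dots> = (\<integral>\<^sup>+x. ennreal (1 / (2 * b) * exp (- \<bar>x\<bar> / b)) * indicator {-a..} x \<partial>lborel)"
    by (auto intro!: nn_integral_cong split: split_indicator)
  also have "\<dots> = emeasure (laplace b) {-a..}"
    unfolding laplace_def by (subst emeasure_density) auto
  also have "\<dots> = ennreal (exp (a/b) / 2)" using upper_tail[OF b, of "-a"] a by simp
  finally show ?thesis .
qed

lemma laplace_finite:
  assumes b: "b > 0"
  shows "finite_measure (laplace b)"
proof (rule finite_measureI)
  have sp: "space (laplace b) = UNIV" unfolding laplace_def by simp
  have "emeasure (laplace b) ({..0} \<union> {0..}) \<le> emeasure (laplace b) {..0} + emeasure (laplace b) {0..}"
    by (rule emeasure_subadditive) (auto simp: laplace_def)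
  also have "\<dots> = ennreal (1/2) + ennreal (1/2)" using lower_tail[OF b, of 0] upper_tail[OF b, of 0] by simp
  also have "\<dots> < \<infinity>" using ennreal_less_top[of "1/2"] ennreal_add_less_top by (metis infinity_ennreal_def)
  finally have lt: "emeasure (laplace b) ({..0} \<union> {0..}) < \<infinity>" .
  have "{..0::real} \<union> {0..} = UNIV" by auto
  then show "emeasure (laplace b) (space (laplace b)) \<noteq> \<infinity>" using lt sp by simp
qed

lemma shift_bound:
  assumes b: "b > 0" and A: "A \<in> sets borel" and B: "B \<in> sets borel"
    and AB: "\<And>x. x \<in> A \<Longrightarrow> x + c \<in> B"
  shows "measure (laplace b) A \<le> exp (\<bar>c\<bar>/b) * measure (laplace b) B"
proof -
  interpret finite_measure "laplace b" using laplace_finite[OF b] .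
  let ?p = "\<lambda>x. ennreal (1 / (2 * b) * exp (- \<bar>x\<bar> / b))"
  have "emeasure (laplace b) A = (\<integral>\<^sup>+x. ?p x * indicator A x \<partial>lborel)"
    unfolding laplace_def using A by (subst emeasure_density) auto
  also have "\<dots> \<le> (\<integral>\<^sup>+x. ennreal (exp (\<bar>c\<bar>/b)) * (?p (c + 1 * x) * indicator B (c + 1 * x)) \<partial>lborel)"
  proof (rule nn_integral_mono)
    fix x
    show "?p x * indicator A x \<le> ennreal (exp (\<bar>c\<bar>/b)) * (?p (c + 1 * x) * indicator B (c + 1 * x))"
    proof (cases "x \<in> A")
      case True
      then have "c + 1 * x \<in> B" using AB[of x] by (simp add: add.commute)
      moreover have "1 / (2 * b) * exp (- \<bar>x\<bar> / b) \<le> exp (\<bar>c\<bar>/b) * (1 / (2 * b) * exp (- \<bar>c + 1 * x\<bar> / b))"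
      proof -
        have "- \<bar>x\<bar> / b \<le> \<bar>c\<bar>/b + - \<bar>c + 1 * x\<bar> / b"
          using b by (simp add: divide_simps)
        then have "exp (- \<bar>x\<bar> / b) \<le> exp (\<bar>c\<bar>/b) * exp (- \<bar>c + 1 * x\<bar> / b)"
          by (simp add: exp_add[symmetric])
        then show ?thesis using b by (simp add: field_simps)
      qed
      ultimately show ?thesis using True b
        by (simp add: ennreal_mult[symmetric] ennreal_leI)
    qed simp
  qed
  also have "\<dots> = ennreal (exp (\<bar>c\<bar>/b)) * (\<integral>\<^sup>+x. ?p (c + 1 * x) * indicator B (c + 1 * x) \<partial>lborel)"
    using B by (subst nn_integral_cmult) auto
  also have "(\<integral>\<^sup>+x. ?p (c + 1 * x) * indicator B (c + 1 * x) \<partial>lborel) = (\<integral>\<^sup>+x. ?p x * indicator B x \<partial>lborel)"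
    using nn_integral_real_affine[of "\<lambda>x. ?p x * indicator B x" 1 c] B by simp
  also have "\<dots> = emeasure (laplace b) B"
    unfolding laplace_def using B by (subst emeasure_density) auto
  finally have "ennreal (measure (laplace b) A) \<le> ennreal (exp (\<bar>c\<bar>/b)) * ennreal (measure (laplace b) B)"
    by (simp add: emeasure_eq_measure)
  then show ?thesis by (simp add: ennreal_mult[symmetric])
qed

lemma cdf_neg:
  assumes b: "b > 0" and a: "a \<le> 0"
  shows "measure (laplace b) {..a} = exp (a/b) / 2"
  using lower_tail[OF b a] by (simp add: measure_def)

lemma quantile_laplace:
  assumes b: "b > 0" and h: "0 < h" "h < 1/2"
  shows "quantile (laplace b) h = b * ln (2*h)"
proof -
  interpret finite_measure "laplace b" using laplace_finite[OF b] .
  have q: "b * ln (2*h) \<le> 0" using b h by (simp add: mult_nonneg_nonpos)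
  have val: "measure (laplace b) {..b * ln (2*h)} = h"
    using cdf_neg[OF b q] b h by simp
  show ?thesis unfolding quantile_def
  proof (rule the_equality)
    fix y assume y: "measure (laplace b) {..y} = h"
    have "y \<le> 0"
    proof (rule ccontr)
      assume "\<not> y \<le> 0"
      then have "measure (laplace b) {..0} \<le> measure (laplace b) {..y}"
        by (intro finite_measure_mono) (auto simp: laplace_def)
      then show False using cdf_neg[OF b, of 0] y h by simp
    qed
    then have "exp (y/b) / 2 = h" using cdf_neg[OF b \<open>y \<le> 0\<close>] y by simp
    then have "y / b = ln (2*h)" using h by (metis ln_exp mult.commute nonzero_eq_divide_eq zero_neq_numeral)
    then show "y = b * ln (2*h)" using b by (simp add: field_simps)
  qed (rule val)
qed

lemma key:
  fixes b \<tau> h \<delta> \<epsilon> u u' :: real and S :: "real set"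
  assumes b: "b > 0" and uu: "\<bar>u - u'\<bar> \<le> \<epsilon> * b"
    and hq: "measure (laplace b) {..-\<tau>} \<le> h" and h1: "h * exp \<epsilon> \<le> \<delta>" and h2: "h \<le> \<delta>"
    and S: "S \<in> sets borel"
  shows "measure (laplace b) ((\<lambda>\<eta>. max u (u + \<tau> + \<eta>)) -` S)
    \<le> exp \<epsilon> * measure (laplace b) ((\<lambda>\<eta>. max u' (u' + \<tau> + \<eta>)) -` S) + \<delta>"
proof -
  interpret finite_measure "laplace b" using laplace_finite[OF b] .
  let ?L = "laplace b"
  define A where "A = (\<lambda>\<eta>. max u (u + \<tau> + \<eta>)) -` S"
  define A' where "A' = (\<lambda>\<eta>. max u' (u' + \<tau> + \<eta>)) -` S"
  have g1: "(\<lambda>\<eta>. max u (u + \<tau> + \<eta>)) \<in> borel_measurable borel" by measurable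
  have g2: "(\<lambda>\<eta>. max u' (u' + \<tau> + \<eta>)) \<in> borel_measurable borel" by measurable
  have Am: "A \<in> sets borel" unfolding A_def using measurable_sets_borel[OF g1 S] .
  have Am': "A' \<in> sets borel" unfolding A'_def using measurable_sets_borel[OF g2 S] .
  have sL: "sets ?L = sets borel" by (simp add: laplace_def)
  have ex: "exp (\<bar>c\<bar>/b) * m \<le> exp \<epsilon> * m" if "\<bar>c\<bar> \<le> \<epsilon> * b" "m \<ge> 0" for c m
  proof -
    have "\<bar>c\<bar>/b \<le> \<epsilon>" using that b by (simp add: divide_simps)
    then show ?thesis using that by (intro mult_right_mono) auto
  qed
  have M0: "measure ?L A' \<ge> 0" by simp
  show ?thesis
  proof (cases "u \<le> u'")
    case True
    define c where "c = u' - u"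
    have cb: "\<bar>-c\<bar> \<le> \<epsilon> * b" using uu True unfolding c_def by simp
    have split: "A = (A \<inter> {..c-\<tau>}) \<union> (A \<inter> {c-\<tau>..})" by auto
    have "measure ?L A \<le> measure ?L (A \<inter> {..c-\<tau>}) + measure ?L (A \<inter> {c-\<tau>..})"
      by (subst split, rule measure_Un_le) (use Am sL in auto)
    also have "measure ?L (A \<inter> {..c-\<tau>}) \<le> \<delta>"
    proof -
      have "measure ?L (A \<inter> {..c-\<tau>}) \<le> measure ?L {..c-\<tau>}"
        by (rule finite_measure_mono) (auto simp: sL)
      also have "\<dots> \<le> exp (\<bar>-c\<bar>/b) * measure ?L {..-\<tau>}"
        by (rule shift_bound[OF b]) auto
      also have "\<dots> \<le> exp \<epsilon> * measure ?L {..-\<tau>}" by (rule ex[OF cb]) simp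
      also have "\<dots> \<le> exp \<epsilon> * h" using hq by simp
      finally show ?thesis using h1 by (simp add: mult.commute)
    qed
    also have "measure ?L (A \<inter> {c-\<tau>..}) \<le> exp \<epsilon> * measure ?L A'"
    proof -
      have "measure ?L (A \<inter> {c-\<tau>..}) \<le> exp (\<bar>-c\<bar>/b) * measure ?L A'"
      proof (rule shift_bound[OF b _ Am'])
        show "A \<inter> {c - \<tau>..} \<in> sets borel" using Am by auto
        fix x assume x: "x \<in> A \<inter> {c - \<tau>..}"
        then have S': "u + \<tau> + x \<in> S" using True unfolding A_def c_def by (auto simp: max_def split: if_splits)
        have xl: "u' - u - \<tau> \<le> x" using x unfolding c_def by simp
        have e: "max u' (u' + \<tau> + (x + - c)) = u + \<tau> + x" using xl unfolding c_def by (simp add: max_def)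
        show "x + - c \<in> A'" unfolding A'_def vimage_def by (simp only: mem_Collect_eq e S')
      qed
      also have "\<dots> \<le> exp \<epsilon> * measure ?L A'" by (rule ex[OF cb M0])
      finally show ?thesis .
    qed
    finally show ?thesis unfolding A_def A'_def by simp
  next
    case False
    define c where "c = u - u'"
    have cb: "\<bar>c\<bar> \<le> \<epsilon> * b" using uu False unfolding c_def by simp
    have split: "A = (A \<inter> {..-\<tau>}) \<union> (A \<inter> {-\<tau><..})" by auto
    have "measure ?L A \<le> measure ?L (A \<inter> {..-\<tau>}) + measure ?L (A \<inter> {-\<tau><..})"
      by (subst split, rule measure_Un_le) (use Am sL in auto)
    also have "measure ?L (A \<inter> {..-\<tau>}) \<le> \<delta>"
    proof -
      have "measure ?L (A \<inter> {..-\<tau>}) \<le> measure ?L {..-\<tau>}"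
        by (rule finite_measure_mono) (auto simp: sL)
      then show ?thesis using hq h2 by simp
    qed
    also have "measure ?L (A \<inter> {-\<tau><..}) \<le> exp \<epsilon> * measure ?L A'"
    proof -
      have "measure ?L (A \<inter> {-\<tau><..}) \<le> exp (\<bar>c\<bar>/b) * measure ?L A'"
      proof (rule shift_bound[OF b _ Am'])
        show "A \<inter> {-\<tau><..} \<in> sets borel" using Am by auto
        fix x assume x: "x \<in> A \<inter> {-\<tau><..}"
        then have S': "u + \<tau> + x \<in> S" unfolding A_def by (auto simp: max_def split: if_splits)
        have xl: "- \<tau> < x" using x by simp
        have e: "max u' (u' + \<tau> + (x + c)) = u + \<tau> + x" using xl False unfolding c_def by (simp add: max_def)
        show "x + c \<in> A'" unfolding A'_def vimage_def by (simp only: mem_Collect_eq e S')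
      qed
      also have "\<dots> \<le> exp \<epsilon> * measure ?L A'" by (rule ex[OF cb M0])
      finally show ?thesis .
    qed
    finally show ?thesis unfolding A_def A'_def by simp
  qed
qed

theorem theorem3p1:
  fixes v :: "'a list \<Rightarrow> real" and \<epsilon> \<delta> \<Delta> :: real
  assumes "\<epsilon> > 0" and "0 < \<delta>" and "\<delta> < 1" and "\<Delta> > 0"
    and "sensitivity_bounded v \<Delta>"
  defines "h \<equiv> \<delta> / (1 + exp \<epsilon>)"
  defines "\<tau> \<equiv> \<bar>quantile (laplace (\<Delta> / \<epsilon>)) h\<bar>"
  shows "differentially_private (positive_laplace_mechanism v \<Delta> \<epsilon> \<tau>) \<epsilon> \<delta>"
proof -
  define b where "b = \<Delta> / \<epsilon>"
  have b: "b > 0" using assms(1,4) unfolding b_def by simp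
  have Db: "\<Delta> = \<epsilon> * b" using assms(1) unfolding b_def by simp
  have e1: "exp \<epsilon> > 1" using assms(1) by simp
  have hpos: "h > 0" unfolding h_def using assms(2) by (simp add: add_pos_pos)
  have ep: "1 + exp \<epsilon> > 0" using e1 by linarith
  have "\<delta> * 2 < 1 + exp \<epsilon>" using assms(3) e1 by linarith
  then have hhalf: "h < 1/2" unfolding h_def using ep by (simp add: divide_simps)
  have h1: "h * exp \<epsilon> \<le> \<delta>" unfolding h_def using assms(2) ep by (simp add: divide_simps)
  have h2: "h \<le> \<delta>" unfolding h_def using assms(2) ep by (simp add: divide_simps)
  have q: "quantile (laplace b) h = b * ln (2*h)" by (rule quantile_laplace[OF b hpos hhalf])
  have ql: "b * ln (2*h) \<le> 0" using b hpos hhalf by (simp add: mult_nonneg_nonpos)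
  have tau: "-\<tau> = b * ln (2*h)" unfolding \<tau>_def b_def[symmetric] q using ql by simp
  have hq: "measure (laplace b) {..-\<tau>} \<le> h"
    unfolding tau using cdf_neg[OF b ql] b hpos by simp
  have M: "measure (positive_laplace_mechanism v \<Delta> \<epsilon> \<tau> D) S
      = measure (laplace b) ((\<lambda>\<eta>. max (v D) (v D + \<tau> + \<eta>)) -` S)" if "S \<in> sets borel" for D S
    unfolding positive_laplace_mechanism_def b_def[symmetric] using that
    by (subst measure_distr) (auto simp: laplace_def)
  have sM: "sets (positive_laplace_mechanism v \<Delta> \<epsilon> \<tau> D) = sets borel" for D
    unfolding positive_laplace_mechanism_def by simp
  show ?thesis unfolding differentially_private_def
  proof (intro allI impI ballI conjI)
    fix D D' S assume nb: "neighboring D D'" and S: "S \<in> sets (positive_laplace_mechanism v \<Delta> \<epsilon> \<tau> D)"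
    have Sb: "S \<in> sets borel" using S sM by simp
    have d: "\<bar>v D - v D'\<bar> \<le> \<epsilon> * b" using assms(5) nb Db unfolding sensitivity_bounded_def by auto
    have d': "\<bar>v D' - v D\<bar> \<le> \<epsilon> * b" using d by linarith
    show "measure (positive_laplace_mechanism v \<Delta> \<epsilon> \<tau> D) S
         \<le> exp \<epsilon> * measure (positive_laplace_mechanism v \<Delta> \<epsilon> \<tau> D') S + \<delta>"
      unfolding M[OF Sb] by (rule key[OF b d hq h1 h2 Sb])
    show "measure (positive_laplace_mechanism v \<Delta> \<epsilon> \<tau> D') S
         \<le> exp \<epsilon> * measure (positive_laplace_mechanism v \<Delta> \<epsilon> \<tau> D) S + \<delta>"
      unfolding M[OF Sb] by (rule key[OF b d' hq h1 h2 Sb])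
  qed
qed

end
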